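(* If a CFSTR contains a self-catalyzing reaction, then it fails the Jacobian Criterion. Conversely, if a CFSTR $\mathfrak{G}$ with non-flow subnetwork $G$ contains no self-catalyzing reaction, then $\mathfrak{G}$ passes the Jacobian Criterion if and only if every $k$-square embedded network of $G$ with $k\ge2$ has nonnegative orientation.
   Context: A chemical reaction network has species $X_1,\dots,X_s$ and reactions $y\to y'$ with $y,y'\in\mathbb{Z}_{\ge0}^s$, $y\ne y'$. Flow reactions are $0\to X_i$ and $X_i\to0$; others are non-flow. A CFSTR contains $X_i\to0$ for every species; its non-flow subnetwork consists of its non-flow reactions. A reaction $y\to y'$ is self-catalyzing if some species $X_j$ has $1\le y_j<y'_j$. For a list of $n$ reactions $y_k\to y'_k$ on $n$ species: reactant matrix $M$ (row $k$ is $y_k$), reaction matrix $R$ (row $k$ is $y_k-y'_k$), orientation $\operatorname{sign}(\det M\det R)$; empty network has orientation $+1$. A $k$-square embedded network of $G$ is given by $k$ species $S$ and $k$ non-flow reactions of $G$, restricted by deleting all species not in $S$ from both complexes (as a list). A CFSTR with $s$ species passes the Jacobian Criterion if every choice of $s$ distinct non-inflow reactions yields $s\times s$ reactant and reaction matrices (columns indexed by all species) with nonnegative orientation. *)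

theory Defs
  imports "Jordan_Normal_Form.Determinant"
begin

text \<open>Species are indexed by 0,...,s-1. A complex is a function nat => nat
  (vanishing outside 0..s-1); a reaction y -> y' is the pair (y, y').\<close>

type_synonym cplx = "nat \<Rightarrow> nat"
type_synonym reaction = "cplx \<times> cplx"

definition zero_cplx :: cplx where "zero_cplx = (\<lambda>_. 0)"

definition unit_cplx :: "nat \<Rightarrow> cplx" where
  "unit_cplx i = (\<lambda>j. if j = i then 1 else 0)"

definition valid_reaction :: "nat \<Rightarrow> reaction \<Rightarrow> bool" where
  "valid_reaction s r \<longleftrightarrow> fst r \<noteq> snd r \<and>
     (\<forall>j\<ge>s. fst r j = 0 \<and> snd r j = 0)"

definition network :: "nat \<Rightarrow> reaction set \<Rightarrow> bool" where
  "network s N \<longleftrightarrow> finite N \<and> (\<forall>r\<in>N. valid_reaction s r)"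

definition inflow :: "nat \<Rightarrow> reaction \<Rightarrow> bool" where
  "inflow s r \<longleftrightarrow> (\<exists>i<s. r = (zero_cplx, unit_cplx i))"

definition outflow :: "nat \<Rightarrow> reaction \<Rightarrow> bool" where
  "outflow s r \<longleftrightarrow> (\<exists>i<s. r = (unit_cplx i, zero_cplx))"

definition flow :: "nat \<Rightarrow> reaction \<Rightarrow> bool" where
  "flow s r \<longleftrightarrow> inflow s r \<or> outflow s r"

definition CFSTR :: "nat \<Rightarrow> reaction set \<Rightarrow> bool" where
  "CFSTR s N \<longleftrightarrow> network s N \<and> (\<forall>i<s. (unit_cplx i, zero_cplx) \<in> N)"

definition nonflow_subnetwork :: "nat \<Rightarrow> reaction set \<Rightarrow> reaction set" where
  "nonflow_subnetwork s N = {r \<in> N. \<not> flow s r}"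

definition self_catalyzing :: "nat \<Rightarrow> reaction \<Rightarrow> bool" where
  "self_catalyzing s r \<longleftrightarrow> (\<exists>j<s. 1 \<le> fst r j \<and> fst r j < snd r j)"

definition reactant_matrix :: "reaction list \<Rightarrow> int mat" where
  "reactant_matrix rs = mat (length rs) (length rs)
     (\<lambda>(k, j). int (fst (rs ! k) j))"

definition reaction_matrix :: "reaction list \<Rightarrow> int mat" where
  "reaction_matrix rs = mat (length rs) (length rs)
     (\<lambda>(k, j). int (fst (rs ! k) j) - int (snd (rs ! k) j))"

text \<open>Orientation; for the empty list both determinants are 1, giving +1.\<close>

definition orientation :: "reaction list \<Rightarrow> int" where
  "orientation rs = sgn (det (reactant_matrix rs) * det (reaction_matrix rs))"

definition passes_jacobian_criterion :: "nat \<Rightarrow> reaction set \<Rightarrow> bool" where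
  "passes_jacobian_criterion s N \<longleftrightarrow>
     (\<forall>rs. length rs = s \<and> distinct rs \<and> set rs \<subseteq> N \<and> (\<forall>r\<in>set rs. \<not> inflow s r)
        \<longrightarrow> orientation rs \<ge> 0)"

text \<open>Restriction of a complex to the species list sp (species sp!b becomes
  species b of the embedded network).\<close>

definition restrict_cplx :: "nat list \<Rightarrow> cplx \<Rightarrow> cplx" where
  "restrict_cplx sp y = (\<lambda>b. if b < length sp then y (sp ! b) else 0)"

definition restrict_reaction :: "nat list \<Rightarrow> reaction \<Rightarrow> reaction" where
  "restrict_reaction sp r = (restrict_cplx sp (fst r), restrict_cplx sp (snd r))"

definition square_embedded_network :: "nat \<Rightarrow> reaction set \<Rightarrow> nat \<Rightarrow> reaction list \<Rightarrow> bool" where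
  "square_embedded_network s G k E \<longleftrightarrow>
     (\<exists>sp rs. length sp = k \<and> distinct sp \<and> set sp \<subseteq> {..<s} \<and>
        length rs = k \<and> distinct rs \<and> set rs \<subseteq> G \<and>
        E = map (restrict_reaction sp) rs)"

end

theory Submission
  imports Defs
begin

definition Mg :: "reaction list \<Rightarrow> nat list \<Rightarrow> int mat" where
  "Mg rs sp = mat (length rs) (length rs) (\<lambda>(k, b). int (fst (rs ! k) (sp ! b)))"

definition Rg :: "reaction list \<Rightarrow> nat list \<Rightarrow> int mat" where
  "Rg rs sp = mat (length rs) (length rs)
     (\<lambda>(k, b). int (fst (rs ! k) (sp ! b)) - int (snd (rs ! k) (sp ! b)))"

definition og :: "reaction list \<Rightarrow> nat list \<Rightarrow> int" where
  "og rs sp = sgn (det (Mg rs sp) * det (Rg rs sp))"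

definition del :: "nat \<Rightarrow> 'a list \<Rightarrow> 'a list" where
  "del k xs = take k xs @ drop (Suc k) xs"

definition outr :: "nat \<Rightarrow> reaction" where
  "outr i = (unit_cplx i, zero_cplx)"

lemma del_length: "k < length xs \<Longrightarrow> length (del k xs) = length xs - 1"
  unfolding del_def by auto

lemma del_nth: "k < length xs \<Longrightarrow> i < length xs - 1 \<Longrightarrow>
   del k xs ! i = xs ! (if i < k then i else Suc i)"
  unfolding del_def by (auto simp: nth_append min_def)

lemma del_distinct: "distinct xs \<Longrightarrow> distinct (del k xs)"
  unfolding del_def using set_take_disj_set_drop_if_distinct[of xs k "Suc k"] by auto

lemma del_set: "set (del k xs) \<subseteq> set xs"
  unfolding del_def by (auto dest: in_set_takeD in_set_dropD)

lemma orientation_og: "orientation rs = og rs [0..<length rs]"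
  unfolding orientation_def og_def reactant_matrix_def reaction_matrix_def Mg_def Rg_def
  by (intro arg_cong[where f=sgn] arg_cong2[where f="(*)"] arg_cong[where f=det] eq_matI) auto

lemma orientation_restrict: "length sp = length rs \<Longrightarrow>
   orientation (map (restrict_reaction sp) rs) = og rs sp"
  unfolding orientation_def og_def reactant_matrix_def reaction_matrix_def Mg_def Rg_def
    restrict_reaction_def restrict_cplx_def
  by (intro arg_cong[where f=sgn] arg_cong2[where f="(*)"] arg_cong[where f=det] eq_matI) auto

lemma det_permute_cols:
  assumes A: "(A :: int mat) \<in> carrier_mat n n" and p: "p permutes {0..<n}"
  shows "det (mat n n (\<lambda>(i,j). A $$ (i, p j))) = signof p * det A"
proof -
  have AT: "transpose_mat A \<in> carrier_mat n n" using A by auto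
  have eq: "mat n n (\<lambda>(i,j). A $$ (i, p j)) =
     transpose_mat (mat n n (\<lambda>(i,j). transpose_mat A $$ (p i, j)))"
    using A p by (intro eq_matI) (auto simp: permutes_in_image)
  have "det (mat n n (\<lambda>(i,j). A $$ (i, p j))) = det (mat n n (\<lambda>(i,j). transpose_mat A $$ (p i, j)))"
    unfolding eq by (rule det_transpose) auto
  also have "\<dots> = signof p * det (transpose_mat A)" by (rule det_permute_rows[OF AT p])
  also have "\<dots> = signof p * det A" using det_transpose[OF A] by simp
  finally show ?thesis .
qed

lemma og_perm:
  assumes len: "length rs = n" "length sp = n" "length sp' = n"
    and p: "p permutes {0..<n}" and sp': "\<And>b. b < n \<Longrightarrow> sp' ! b = sp ! p b"
  shows "og rs sp' = og rs sp"
proof -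
  have pin: "\<And>b. b < n \<Longrightarrow> p b < n" using p by (auto simp: permutes_in_image)
  have M: "Mg rs sp' = mat n n (\<lambda>(i,j). Mg rs sp $$ (i, p j))"
    using len by (intro eq_matI) (auto simp: Mg_def sp' pin)
  have R: "Rg rs sp' = mat n n (\<lambda>(i,j). Rg rs sp $$ (i, p j))"
    using len by (intro eq_matI) (auto simp: Rg_def sp' pin)
  have s: "(signof p :: int) * signof p = 1" using signof_pm_one[of p] by auto
  have "det (Mg rs sp') * det (Rg rs sp') = (signof p * signof p) * (det (Mg rs sp) * det (Rg rs sp))"
    unfolding M R using len
    by (subst det_permute_cols[OF _ p], simp add: Mg_def)+ (simp add: Rg_def ac_simps, simp add: ac_simps)
  thus ?thesis unfolding og_def s by simp
qed

lemma og_del: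
  assumes len: "length rs = n" "length sp = n" and dist: "distinct sp"
    and k: "k < n" and c: "c < n" and rk: "rs ! k = outr (sp ! c)"
  shows "og rs sp = og (del k rs) (del c sp)"
proof -
  have rowM: "\<And>b. b < n \<Longrightarrow> Mg rs sp $$ (k, b) = (if b = c then 1 else 0)"
    using len k c rk dist by (auto simp: Mg_def outr_def unit_cplx_def nth_eq_iff_index_eq)
  have rowR: "\<And>b. b < n \<Longrightarrow> Rg rs sp $$ (k, b) = (if b = c then 1 else 0)"
    using len k c rk dist by (auto simp: Rg_def outr_def unit_cplx_def zero_cplx_def nth_eq_iff_index_eq)
  have CM: "Mg rs sp \<in> carrier_mat n n" using len by (simp add: Mg_def)
  have CR: "Rg rs sp \<in> carrier_mat n n" using len by (simp add: Rg_def)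
  have dM: "det (Mg rs sp) = cofactor (Mg rs sp) k c"
    unfolding laplace_expansion_row[OF CM k]
    by (subst sum.cong[OF refl, where h="\<lambda>j. if j = c then cofactor (Mg rs sp) k j else 0"])
       (auto simp: rowM c)
  have dR: "det (Rg rs sp) = cofactor (Rg rs sp) k c"
    unfolding laplace_expansion_row[OF CR k]
    by (subst sum.cong[OF refl, where h="\<lambda>j. if j = c then cofactor (Rg rs sp) k j else 0"])
       (auto simp: rowR c)
  have l1: "length (del k rs) = n - 1" "length (del c sp) = n - 1"
    using len k c by (auto simp: del_length)
  have eM: "mat_delete (Mg rs sp) k c = Mg (del k rs) (del c sp)"
    using len k c l1 by (intro eq_matI) (auto simp: mat_delete_def Mg_def del_nth)
  have eR: "mat_delete (Rg rs sp) k c = Rg (del k rs) (del c sp)"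
    using len k c l1 by (intro eq_matI) (auto simp: mat_delete_def Rg_def del_nth)
  have pw: "((-1::int) ^ (k + c)) * (-1) ^ (k + c) = 1"
    by (metis power_add[symmetric] mult_2[symmetric] power_mult power_minus1_even power_one)
  have "det (Mg rs sp) * det (Rg rs sp) =
     ((-1::int) ^ (k + c) * (-1) ^ (k + c)) * (det (Mg (del k rs) (del c sp)) * det (Rg (del k rs) (del c sp)))"
    unfolding dM dR cofactor_def eM eR by (simp add: ac_simps)
  thus ?thesis unfolding og_def pw by simp
qed

lemma og_zero_row:
  assumes len: "length rs = n" "length sp = n"
    and k: "k < n" and rk: "rs ! k = outr t" and t: "t \<notin> set sp"
  shows "og rs sp = 0"
proof -
  have "Mg rs sp = mat\<^sub>r n n (\<lambda>i. if i = k then 0\<^sub>v n else row (Mg rs sp) i)"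
    using len k rk t by (intro eq_matI) (auto simp: Mg_def outr_def unit_cplx_def)
  moreover have "det (mat\<^sub>r n n (\<lambda>i. if i = k then 0\<^sub>v n else row (Mg rs sp) i)) = 0"
    by (rule det_row_0[OF k]) (use len in \<open>auto simp: Mg_def\<close>)
  ultimately have "det (Mg rs sp) = 0" by simp
  thus ?thesis unfolding og_def by simp
qed

lemma og_append_outs:
  assumes "distinct (sp @ T)" "length rs = length sp"
  shows "og (rs @ map outr T) (sp @ T) = og rs sp"
  using assms
proof (induction T rule: rev_induct)
  case Nil
  then show ?case by simp
next
  case (snoc t T)
  let ?rs = "rs @ map outr T" and ?sp = "sp @ T"
  have d: "distinct (?sp @ [t])" using snoc.prems by simp
  have "og (?rs @ [outr t]) (?sp @ [t]) = og (del (length ?sp) (?rs @ [outr t])) (del (length ?sp) (?sp @ [t]))"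
    by (rule og_del[where n="Suc (length ?sp)"]) (use snoc.prems d in \<open>auto simp: nth_append\<close>)
  also have "\<dots> = og ?rs ?sp" using snoc.prems by (simp add: del_def)
  also have "\<dots> = og rs sp" using snoc by simp
  finally show ?case by simp
qed

lemma det1: assumes "(A :: int mat) \<in> carrier_mat 1 1" shows "det A = A $$ (0,0)"
proof -
  have "mat_delete A 0 0 \<in> carrier_mat 0 0" using mat_delete_carrier[OF assms] by simp
  hence "det (mat_delete A 0 0) = 1" by simp
  thus ?thesis by (subst laplace_expansion_row[OF assms, of 0]) (auto simp: cofactor_def)
qed

lemma og_single: "og [r] [j] = sgn (int (fst r j) * (int (fst r j) - int (snd r j)))"
proof -
  have "det (Mg [r] [j]) = int (fst r j)" by (subst det1) (auto simp: Mg_def)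
  moreover have "det (Rg [r] [j]) = int (fst r j) - int (snd r j)" by (subst det1) (auto simp: Rg_def)
  ultimately show ?thesis unfolding og_def by simp
qed

lemma og_perm_upt:
  assumes "distinct sp" "set sp = {..<length sp}" "length rs = length sp"
  shows "og rs sp = og rs [0..<length sp]"
proof -
  let ?n = "length sp"
  define p where "p = (\<lambda>b. if b < ?n then sp ! b else b)"
  have "bij_betw (\<lambda>b. sp ! b) {0..<?n} {0..<?n}"
    using assms by (metis atLeast0LessThan bij_betw_nth)
  hence "bij_betw p {0..<?n} {0..<?n}"
    by (rule bij_betw_cong[THEN iffD1, rotated]) (simp add: p_def)
  hence p: "p permutes {0..<?n}"
    by (rule bij_imp_permutes) (simp add: p_def)
  show ?thesis
    by (rule og_perm[OF assms(3) _ _ p]) (use assms nth_mem in \<open>fastforce simp: p_def\<close>)+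
qed

lemma unit_ne_zero: "unit_cplx i \<noteq> zero_cplx"
  unfolding unit_cplx_def zero_cplx_def by (metis one_neq_zero)

lemma unit_inj: "unit_cplx i = unit_cplx j \<longleftrightarrow> i = j"
  unfolding unit_cplx_def by (metis one_neq_zero)

lemma outr_inj: "outr i = outr j \<longleftrightarrow> i = j"
  unfolding outr_def by (simp add: unit_inj)

lemma og_nil: "og [] [] = 1"
  unfolding og_def Mg_def Rg_def by simp

lemma og_nonneg:
  assumes H: "\<forall>k\<ge>2. \<forall>E. square_embedded_network s G k E \<longrightarrow> orientation E \<ge> 0"
    and nsc: "\<forall>r\<in>G. \<not> self_catalyzing s r"
  shows "length rs = n \<Longrightarrow> length sp = n \<Longrightarrow> distinct sp \<Longrightarrow> set sp \<subseteq> {..<s} \<Longrightarrow>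
    distinct rs \<Longrightarrow> (\<forall>r\<in>set rs. (\<exists>i<s. r = outr i) \<or> r \<in> G) \<Longrightarrow> og rs sp \<ge> 0"
proof (induction n arbitrary: rs sp)
  case 0
  then show ?case by (simp add: og_nil)
next
  case (Suc n)
  show ?case
  proof (cases "\<exists>k<Suc n. \<exists>i. rs ! k = outr i")
    case True
    then obtain k i where k: "k < Suc n" and rk: "rs ! k = outr i" by blast
    show ?thesis
    proof (cases "i \<in> set sp")
      case True
      obtain c where c: "c < Suc n" "sp ! c = i" using True Suc.prems by (metis in_set_conv_nth)
      have "og rs sp = og (del k rs) (del c sp)"
        by (rule og_del[where n="Suc n"]) (use Suc.prems k c rk in auto)
      also have "\<dots> \<ge> 0"
      proof (rule Suc.IH)
        show "length (del k rs) = n" "length (del c sp) = n"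
          using Suc.prems k c by (auto simp: del_length)
        show "distinct (del c sp)" "distinct (del k rs)" using Suc.prems by (auto simp: del_distinct)
        show "set (del c sp) \<subseteq> {..<s}" using Suc.prems(4) del_set[of c sp] by (rule subset_trans[rotated])
        show "\<forall>r\<in>set (del k rs). (\<exists>i<s. r = outr i) \<or> r \<in> G" using Suc.prems(6) del_set[of k rs] by (meson subsetD)
      qed
      finally show ?thesis .
    next
      case False
      have "og rs sp = 0"
        by (rule og_zero_row[where n="Suc n"]) (use Suc.prems k rk False in auto)
      thus ?thesis by simp
    qed
  next
    case False
    have allG: "\<forall>r\<in>set rs. r \<in> G"
    proof
      fix r assume "r \<in> set rs"
      then obtain k where k: "k < Suc n" "rs ! k = r" using Suc.prems(1) by (auto simp: in_set_conv_nth)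
      hence "\<not> (\<exists>i<s. r = outr i)" using False by blast
      thus "r \<in> G" using Suc.prems(6) \<open>r \<in> set rs\<close> by blast
    qed
    show ?thesis
    proof (cases "n = 0")
      case True
      obtain r j where rs: "rs = [r]" and sp: "sp = [j]"
        using Suc.prems(1,2) True by (auto simp: length_Suc_conv)
      have j: "j < s" using Suc.prems sp by auto
      have "\<not> self_catalyzing s r" using nsc allG rs by auto
      hence "\<not> (1 \<le> fst r j \<and> fst r j < snd r j)" using j unfolding self_catalyzing_def by blast
      hence "int (fst r j) * (int (fst r j) - int (snd r j)) \<ge> 0"
        by (cases "fst r j = 0") auto
      thus ?thesis unfolding rs sp og_single by (simp add: sgn_if)
    next
      case False
      have "square_embedded_network s G (Suc n) (map (restrict_reaction sp) rs)"
        unfolding square_embedded_network_def using Suc.prems allG by blast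
      moreover have "Suc n \<ge> 2" using False by simp
      ultimately have "orientation (map (restrict_reaction sp) rs) \<ge> 0" using H by blast
      thus ?thesis using orientation_restrict Suc.prems by simp
    qed
  qed
qed

lemma outr_not_inflow: "\<not> inflow s (outr i)"
  unfolding inflow_def outr_def using unit_ne_zero by auto

lemma outr_flow: "i < s \<Longrightarrow> flow s (outr i)"
  unfolding flow_def outflow_def outr_def by auto

lemma build_rs:
  assumes len: "length rs0 = length sp" and d: "distinct (sp @ T)" and st: "set (sp @ T) = {..<s}"
  shows "orientation (rs0 @ map outr T) = og rs0 sp" "length (rs0 @ map outr T) = s"
proof -
  have ls: "length (sp @ T) = s" using distinct_card[OF d] st by simp
  show l: "length (rs0 @ map outr T) = s" using ls len by simp
  have "orientation (rs0 @ map outr T) = og (rs0 @ map outr T) [0..<s]"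
    using orientation_og l by metis
  also have "\<dots> = og (rs0 @ map outr T) (sp @ T)"
    using og_perm_upt[of "sp @ T" "rs0 @ map outr T"] d st ls l by simp
  also have "\<dots> = og rs0 sp" by (rule og_append_outs[OF d len])
  finally show "orientation (rs0 @ map outr T) = og rs0 sp" .
qed

lemma distinct_outs: "distinct (map outr T) \<longleftrightarrow> distinct T"
  by (simp add: distinct_map inj_on_def outr_inj)

theorem mainTheorem4:
  fixes s :: nat and N :: "reaction set"
  assumes "CFSTR s N"
  shows "((\<exists>r\<in>N. self_catalyzing s r) \<longrightarrow> \<not> passes_jacobian_criterion s N) \<and>
         (\<not> (\<exists>r\<in>nonflow_subnetwork s N. self_catalyzing s r) \<longrightarrow>
           (passes_jacobian_criterion s N \<longleftrightarrow>
            (\<forall>k\<ge>2. \<forall>E. square_embedded_network s (nonflow_subnetwork s N) k E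
                 \<longrightarrow> orientation E \<ge> 0)))"
proof -
  have outN: "\<And>i. i < s \<Longrightarrow> outr i \<in> N" using assms unfolding CFSTR_def outr_def by auto
  let ?G = "nonflow_subnetwork s N"
  have part1: "\<not> passes_jacobian_criterion s N" if "\<exists>r\<in>N. self_catalyzing s r"
  proof
    assume P: "passes_jacobian_criterion s N"
    from that obtain r j where rN: "r \<in> N" and j: "j < s" and y: "1 \<le> fst r j" "fst r j < snd r j"
      unfolding self_catalyzing_def by blast
    define T where "T = filter (\<lambda>i. i \<noteq> j) [0..<s]"
    have d: "distinct ([j] @ T)" unfolding T_def by simp
    have st: "set ([j] @ T) = {..<s}" unfolding T_def using j by auto
    have o: "orientation ([r] @ map outr T) = og [r] [j]" and l: "length ([r] @ map outr T) = s"
      using build_rs[of "[r]" "[j]" T, OF _ d st] by simp_all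
    have "int (fst r j) * (int (fst r j) - int (snd r j)) < 0"
      using y by (intro mult_pos_neg) auto
    hence neg: "og [r] [j] < 0" by (simp add: og_single)
    have rnot: "r \<notin> set (map outr T)"
    proof
      assume "r \<in> set (map outr T)"
      then obtain i where "r = outr i" by auto
      hence "snd r j = 0" by (simp add: outr_def zero_cplx_def)
      thus False using y by simp
    qed
    have rninf: "\<not> inflow s r"
      using y unfolding inflow_def zero_cplx_def by auto
    have "orientation ([r] @ map outr T) \<ge> 0"
      using P unfolding passes_jacobian_criterion_def
    proof (elim allE impE)
      show "length ([r] @ map outr T) = s \<and> distinct ([r] @ map outr T) \<and> set ([r] @ map outr T) \<subseteq> N \<and>
          (\<forall>r\<in>set ([r] @ map outr T). \<not> inflow s r)"
        using l rnot rninf rN outN d outr_not_inflow by (auto simp: distinct_outs T_def)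
    qed
    thus False using o neg by simp
  qed
  have part2: "passes_jacobian_criterion s N \<longleftrightarrow>
            (\<forall>k\<ge>2. \<forall>E. square_embedded_network s ?G k E \<longrightarrow> orientation E \<ge> 0)"
    if nsc: "\<not> (\<exists>r\<in>?G. self_catalyzing s r)"
  proof
    assume P: "passes_jacobian_criterion s N"
    show "\<forall>k\<ge>2. \<forall>E. square_embedded_network s ?G k E \<longrightarrow> orientation E \<ge> 0"
    proof (intro allI impI)
      fix k E assume "square_embedded_network s ?G k E"
      then obtain sp rs0 where sp: "length sp = k" "distinct sp" "set sp \<subseteq> {..<s}"
        and rs0: "length rs0 = k" "distinct rs0" "set rs0 \<subseteq> ?G" and E: "E = map (restrict_reaction sp) rs0"
        unfolding square_embedded_network_def by blast
      define T where "T = filter (\<lambda>i. i \<notin> set sp) [0..<s]"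
      have d: "distinct (sp @ T)" unfolding T_def using sp by auto
      have st: "set (sp @ T) = {..<s}" unfolding T_def using sp by auto
      have o: "orientation (rs0 @ map outr T) = og rs0 sp" and l: "length (rs0 @ map outr T) = s"
        using build_rs[OF _ d st] sp rs0 by auto
      have Ts: "set T \<subseteq> {..<s}" unfolding T_def by auto
      have disj: "set rs0 \<inter> set (map outr T) = {}"
      proof -
        have "\<And>i. i \<in> set T \<Longrightarrow> outr i \<notin> ?G" using Ts outr_flow
          unfolding nonflow_subnetwork_def by auto
        thus ?thesis using rs0 by auto
      qed
      have G_ninf: "\<And>r. r \<in> ?G \<Longrightarrow> \<not> inflow s r" unfolding nonflow_subnetwork_def flow_def by auto
      have "orientation (rs0 @ map outr T) \<ge> 0"
        using P unfolding passes_jacobian_criterion_def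
      proof (elim allE impE)
        show "length (rs0 @ map outr T) = s \<and> distinct (rs0 @ map outr T) \<and> set (rs0 @ map outr T) \<subseteq> N \<and>
          (\<forall>r\<in>set (rs0 @ map outr T). \<not> inflow s r)"
          using l disj rs0 d Ts outN G_ninf outr_not_inflow
          by (auto simp: distinct_outs nonflow_subnetwork_def)
      qed
      thus "orientation E \<ge> 0" using o E orientation_restrict sp rs0 by simp
    qed
  next
    assume H: "\<forall>k\<ge>2. \<forall>E. square_embedded_network s ?G k E \<longrightarrow> orientation E \<ge> 0"
    show "passes_jacobian_criterion s N"
      unfolding passes_jacobian_criterion_def
    proof (intro allI impI)
      fix rs assume A: "length rs = s \<and> distinct rs \<and> set rs \<subseteq> N \<and> (\<forall>r\<in>set rs. \<not> inflow s r)"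
      have cls: "\<forall>r\<in>set rs. (\<exists>i<s. r = outr i) \<or> r \<in> ?G"
      proof
        fix r assume r: "r \<in> set rs"
        show "(\<exists>i<s. r = outr i) \<or> r \<in> ?G"
        proof (cases "flow s r")
          case True
          hence "outflow s r" using A r unfolding flow_def by auto
          thus ?thesis unfolding outflow_def outr_def by auto
        next
          case False
          thus ?thesis using A r unfolding nonflow_subnetwork_def by auto
        qed
      qed
      have "og rs [0..<s] \<ge> 0"
        using og_nonneg[OF H _, where rs=rs and n=s and sp="[0..<s]"] nsc A cls by (auto simp: atLeast0LessThan)
      thus "orientation rs \<ge> 0" using orientation_og A by metis
    qed
  qed
  show ?thesis using part1 part2 by blast
qed

end
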